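(* Let $L$ be a finite set of horizontal line segments in an axis-parallel rectangle $R$ of height $h$, let $\rho>0$, and let $S_1,\dots,S_t$, $t=\lceil h/(\sqrt3\rho)\rceil$, be the horizontal strips of $R$ of width $\sqrt3\rho$. Let $Q_j$ and $Z_j$ ($j=1,\dots,t$) be the output point set and the number of iterations of the strip-greedy procedure described in the context, applied to strip $S_j$. Then (a) $\bigcup_{j=1}^t Q_j$ covers every segment of $L$ and $\left|\bigcup_{j=1}^t Q_j\right| \le 6\,OPT_h$, and (b) $\frac13\sum_{j=1}^t Z_j \le OPT_h$, where $OPT_h$ is the minimum number of sensors of range $\rho$ needed to cover all segments of $L$.
   Context: A sensor at point $s$ with range $\rho$ covers a segment $\ell$ if $\operatorname{dist}(s,\ell)\le\rho$; the hippodrome $H(\ell,\rho)$ is the set of points at distance at most $\rho$ from $\ell$. Write $R=[x_0,x_m]\times[y_0,y_0+h]$ and $S_i = R\cap\{y_0+(i-1)\sqrt3\rho \le y < y_0+i\sqrt3\rho\}$ (the last strip closed at the top); each horizontal segment lies in exactly one strip, and $L_i$ denotes the segments of $L$ lying in $S_i$. Strip-greedy procedure for $S_i$: set $Q_i=\emptyset$ and repeat while $L_i\neq\emptyset$: let $\ell_1\in L_i$ be the segment whose right endpoint $v_1$ has the smallest $x$-coordinate; let $L_i^1$ be the set of segments of $L_i$ whose hippodromes intersect $H(\ell_1,\rho)$ (i.e. at distance at most $2\rho$ from $\ell_1$); let $C$ be the $2\rho\times\sqrt3\rho$ rectangle inside $S_i$ (spanning the strip vertically) whose left side lies on the vertical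 line through $v_1$; split $C$ into two $\rho\times\sqrt3\rho$ rectangles and add their two centers to $Q_i$ (each of these rectangles is contained in the disk of radius $\rho$ about its center); delete $L_i^1\cup\{\ell_1\}$ from $L_i$. $Z_i$ is the number of iterations performed, so $|Q_i|=2Z_i$. *)

theory Defs
  imports "HOL-Analysis.Analysis"
begin

text \<open>A horizontal segment is encoded as a triple (a, b, y) with a \<le> b: it is the
  closed segment from (a,y) to (b,y). Its right endpoint has x-coordinate b.\<close>

type_synonym hseg = "real \<times> real \<times> real"

definition seg_left :: "hseg \<Rightarrow> real" where "seg_left l = fst l"
definition seg_right :: "hseg \<Rightarrow> real" where "seg_right l = fst (snd l)"
definition seg_y :: "hseg \<Rightarrow> real" where "seg_y l = snd (snd l)"

definition seg_set :: "hseg \<Rightarrow> (real \<times> real) set" where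
  "seg_set l = closed_segment (seg_left l, seg_y l) (seg_right l, seg_y l)"

definition covers :: "real \<Rightarrow> real \<times> real \<Rightarrow> hseg \<Rightarrow> bool" where
  "covers \<rho> s l \<longleftrightarrow> infdist s (seg_set l) \<le> \<rho>"

definition hippodrome :: "hseg \<Rightarrow> real \<Rightarrow> (real \<times> real) set" where
  "hippodrome l \<rho> = {p. infdist p (seg_set l) \<le> \<rho>}"

definition seg_in_rect :: "real \<Rightarrow> real \<Rightarrow> real \<Rightarrow> real \<Rightarrow> hseg \<Rightarrow> bool" where
  "seg_in_rect x0 xm y0 h l \<longleftrightarrow>
     x0 \<le> seg_left l \<and> seg_left l \<le> seg_right l \<and> seg_right l \<le> xm \<and>
     y0 \<le> seg_y l \<and> seg_y l \<le> y0 + h"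

definition num_strips :: "real \<Rightarrow> real \<Rightarrow> nat" where
  "num_strips h \<rho> = nat \<lceil>h / (sqrt 3 * \<rho>)\<rceil>"

text \<open>Segment l lies in strip S_i (the last strip, i = t, closed at the top).\<close>
definition in_strip :: "real \<Rightarrow> real \<Rightarrow> real \<Rightarrow> nat \<Rightarrow> hseg \<Rightarrow> bool" where
  "in_strip y0 h \<rho> i l \<longleftrightarrow>
     y0 + (real i - 1) * (sqrt 3 * \<rho>) \<le> seg_y l \<and>
     (seg_y l < y0 + real i * (sqrt 3 * \<rho>) \<or> (i = num_strips h \<rho> \<and> seg_y l = y0 + h))"

definition strip_segs :: "hseg set \<Rightarrow> real \<Rightarrow> real \<Rightarrow> real \<Rightarrow> nat \<Rightarrow> hseg set" where
  "strip_segs L y0 h \<rho> i = {l \<in> L. in_strip y0 h \<rho> i l}"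

text \<open>The two centers added in an iteration whose leftmost right endpoint has x-coordinate vx:
  centers of the two \<rho> \<times> \<surd>3\<rho> halves of C = [vx, vx+2\<rho>] \<times> [y0+(i-1)\<surd>3\<rho>, y0+i\<surd>3\<rho>].\<close>
definition greedy_centers :: "real \<Rightarrow> real \<Rightarrow> nat \<Rightarrow> real \<Rightarrow> (real \<times> real) set" where
  "greedy_centers \<rho> y0 i vx =
     (let ym = y0 + (real i - 1/2) * (sqrt 3 * \<rho>)
      in {(vx + \<rho>/2, ym), (vx + 3*\<rho>/2, ym)})"

text \<open>Strip-greedy procedure on strip i as a relation:
  strip_greedy \<rho> y0 i Li Q Z means that some execution of the procedure
  (ties in the choice of l1 broken arbitrarily) on the segment set Li outputs Q after Z iterations.\<close>
inductive strip_greedy :: "real \<Rightarrow> real \<Rightarrow> nat \<Rightarrow> hseg set \<Rightarrow> (real \<times> real) set \<Rightarrow> nat \<Rightarrow> bool"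
  for \<rho> y0 i where
  stop: "strip_greedy \<rho> y0 i {} {} 0"
| step: "\<lbrakk> l1 \<in> Li; \<forall>l\<in>Li. seg_right l1 \<le> seg_right l;
          strip_greedy \<rho> y0 i
            (Li - ({l1} \<union> {l\<in>Li. hippodrome l \<rho> \<inter> hippodrome l1 \<rho> \<noteq> {}})) Q Z \<rbrakk>
        \<Longrightarrow> strip_greedy \<rho> y0 i Li (greedy_centers \<rho> y0 i (seg_right l1) \<union> Q) (Suc Z)"

definition OPT :: "real \<Rightarrow> hseg set \<Rightarrow> nat" where
  "OPT \<rho> L = (LEAST n. \<exists>P. finite P \<and> card P = n \<and> (\<forall>l\<in>L. \<exists>s\<in>P. covers \<rho> s l))"

end

theory Submission
  imports Defs
begin

lemma seg_set_eq:
  assumes "seg_left l \<le> seg_right l"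
  shows "seg_set l = {seg_left l..seg_right l} \<times> {seg_y l}"
  unfolding seg_set_def using assms
  by (simp add: closed_segment_same_snd closed_segment_eq_real_ivl1)

lemma covers_point:
  assumes "infdist s (seg_set l) \<le> \<rho>" "seg_left l \<le> seg_right l"
  shows "\<exists>x. seg_left l \<le> x \<and> x \<le> seg_right l \<and> dist s (x, seg_y l) \<le> \<rho>"
proof -
  have cl: "closed (seg_set l)" "seg_set l \<noteq> {}"
    using assms(2) by (auto simp: seg_set_eq closed_Times)
  obtain q where q: "q \<in> seg_set l" "infdist s (seg_set l) = dist s q"
    using infdist_attains_inf[OF cl] by blast
  then show ?thesis using assms by (auto simp: seg_set_eq)
qed

lemma dist_comp:
  fixes s :: "real \<times> real"
  shows "\<bar>fst s - x\<bar> \<le> dist s (x, y)" "\<bar>snd s - y\<bar> \<le> dist s (x, y)"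
  using dist_fst_le[of s "(x,y)"] dist_snd_le[of s "(x,y)"] by (auto simp: dist_real_def)

lemma hipp_inter:
  assumes "hippodrome a \<rho> \<inter> hippodrome b \<rho> \<noteq> {}"
    "seg_left a \<le> seg_right a" "seg_left b \<le> seg_right b"
  shows "seg_left a \<le> seg_right b + 2 * \<rho>"
proof -
  obtain p where p: "infdist p (seg_set a) \<le> \<rho>" "infdist p (seg_set b) \<le> \<rho>"
    using assms(1) unfolding hippodrome_def by auto
  obtain xa where xa: "seg_left a \<le> xa" "dist p (xa, seg_y a) \<le> \<rho>"
    using covers_point[OF p(1) assms(2)] by auto
  obtain xb where xb: "xb \<le> seg_right b" "dist p (xb, seg_y b) \<le> \<rho>"
    using covers_point[OF p(2) assms(3)] by auto
  show ?thesis using xa xb dist_comp(1)[of p xa "seg_y a"] dist_comp(1)[of p xb "seg_y b"]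
    by linarith
qed

lemma sqrt3_sq: "(sqrt 3 * \<rho> / 2)^2 = 3 * \<rho>^2 / 4"
  by (simp add: power_mult_distrib power_divide)

lemma center_cover:
  assumes "\<rho> > 0" "seg_left l \<le> seg_right l" "v \<le> seg_right l" "seg_left l \<le> v + 2 * \<rho>"
    "y0 + (real i - 1) * (sqrt 3 * \<rho>) \<le> seg_y l" "seg_y l \<le> y0 + real i * (sqrt 3 * \<rho>)"
  shows "\<exists>q\<in>greedy_centers \<rho> y0 i v. covers \<rho> q l"
proof -
  define x where "x = max (seg_left l) v"
  define ym where "ym = y0 + (real i - 1/2) * (sqrt 3 * \<rho>)"
  have xin: "seg_left l \<le> x" "x \<le> seg_right l" "v \<le> x" "x \<le> v + 2 * \<rho>"
    using assms unfolding x_def by auto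
  have dy: "\<bar>ym - seg_y l\<bar> \<le> sqrt 3 * \<rho> / 2"
    using assms(5,6) unfolding ym_def by (auto simp: algebra_simps abs_if)
  have dy2: "(ym - seg_y l)^2 \<le> 3 * \<rho>^2 / 4"
  proof -
    have "(ym - seg_y l)^2 = \<bar>ym - seg_y l\<bar>^2" by simp
    also have "\<dots> \<le> (sqrt 3 * \<rho> / 2)^2" by (rule power_mono[OF dy]) simp
    finally show ?thesis by (simp add: sqrt3_sq)
  qed
  have mem: "(x, seg_y l) \<in> seg_set l" using xin assms(2) by (simp add: seg_set_eq)
  obtain cx where cx: "(cx, ym) \<in> greedy_centers \<rho> y0 i v" "\<bar>cx - x\<bar> \<le> \<rho> / 2"
  proof (cases "x \<le> v + \<rho>")
    case True
    then show ?thesis using that[of "v + \<rho>/2"] xin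
      by (auto simp: greedy_centers_def ym_def Let_def abs_if)
  next
    case False
    then show ?thesis using that[of "v + 3*\<rho>/2"] xin
      by (auto simp: greedy_centers_def ym_def Let_def abs_if)
  qed
  have dx2: "(cx - x)^2 \<le> \<rho>^2 / 4"
  proof -
    have "(cx - x)^2 = \<bar>cx - x\<bar>^2" by simp
    also have "\<dots> \<le> (\<rho>/2)^2" by (rule power_mono[OF cx(2)]) simp
    finally show ?thesis by (simp add: power_divide)
  qed
  have "dist (cx, ym) (x, seg_y l) \<le> \<rho>"
    unfolding dist_Pair_Pair dist_real_def
    using dx2 dy2 assms(1) by (intro real_le_lsqrt) (auto simp: power2_abs)
  then have "covers \<rho> (cx, ym) l"
    unfolding covers_def by (rule infdist_le2[OF mem])
  then show ?thesis using cx(1) by blast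
qed

definition SB :: "real \<Rightarrow> real \<Rightarrow> nat \<Rightarrow> hseg \<Rightarrow> bool" where
  "SB \<rho> y0 i l \<longleftrightarrow> seg_left l \<le> seg_right l \<and> y0 + (real i - 1) * (sqrt 3 * \<rho>) \<le> seg_y l
     \<and> seg_y l \<le> y0 + real i * (sqrt 3 * \<rho>)"

lemma greedy_props:
  assumes "strip_greedy \<rho> y0 i Li Q Z" "\<rho> > 0" "\<forall>l\<in>Li. SB \<rho> y0 i l"
  shows "finite Q \<and> card Q \<le> 2 * Z \<and> (\<forall>l\<in>Li. \<exists>q\<in>Q. covers \<rho> q l) \<and>
    (\<exists>C\<subseteq>Li. finite C \<and> card C = Z \<and>
       (\<forall>a\<in>C. \<forall>b\<in>C. a \<noteq> b \<longrightarrow> hippodrome a \<rho> \<inter> hippodrome b \<rho> = {}))"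
  using assms
proof (induction rule: strip_greedy.induct)
  case stop
  then show ?case by auto
next
  case (step l1 Li Q Z)
  let ?R = "Li - ({l1} \<union> {l\<in>Li. hippodrome l \<rho> \<inter> hippodrome l1 \<rho> \<noteq> {}})"
  have IH: "finite Q \<and> card Q \<le> 2 * Z \<and> (\<forall>l\<in>?R. \<exists>q\<in>Q. covers \<rho> q l) \<and>
    (\<exists>C\<subseteq>?R. finite C \<and> card C = Z \<and>
       (\<forall>a\<in>C. \<forall>b\<in>C. a \<noteq> b \<longrightarrow> hippodrome a \<rho> \<inter> hippodrome b \<rho> = {}))"
    using step by auto
  let ?G = "greedy_centers \<rho> y0 i (seg_right l1)"
  have G: "finite ?G" "card ?G \<le> 2"
    by (auto simp: greedy_centers_def Let_def card_insert_if)
  have fin: "finite (?G \<union> Q)" using G IH by auto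
  have card: "card (?G \<union> Q) \<le> 2 * Suc Z"
  proof -
    have "card Q \<le> 2 * Z" using IH by blast
    moreover have "2 * Suc Z = 2 * Z + 2" by simp
    ultimately show ?thesis using card_Un_le[of ?G Q] G by linarith
  qed
  have cov: "\<forall>l\<in>Li. \<exists>q\<in>?G \<union> Q. covers \<rho> q l"
  proof
    fix l assume l: "l \<in> Li"
    show "\<exists>q\<in>?G \<union> Q. covers \<rho> q l"
    proof (cases "l \<in> ?R")
      case True then show ?thesis using IH by blast
    next
      case False
      have sl: "SB \<rho> y0 i l" "SB \<rho> y0 i l1" using step.prems l step.hyps(1) by auto
      have "seg_left l \<le> seg_right l1 + 2 * \<rho>"
      proof (cases "l = l1")
        case True then show ?thesis using sl step.prems by (auto simp: SB_def)
      next
        case False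
        then have "hippodrome l \<rho> \<inter> hippodrome l1 \<rho> \<noteq> {}" using \<open>l \<notin> ?R\<close> l by auto
        then show ?thesis using hipp_inter sl by (auto simp: SB_def)
      qed
      then have "\<exists>q\<in>?G. covers \<rho> q l"
        using center_cover[of \<rho> l "seg_right l1" y0 i] step.prems sl step.hyps(2) l
        by (auto simp: SB_def)
      then show ?thesis by blast
    qed
  qed
  obtain C where C: "C \<subseteq> ?R" "finite C" "card C = Z"
    "\<forall>a\<in>C. \<forall>b\<in>C. a \<noteq> b \<longrightarrow> hippodrome a \<rho> \<inter> hippodrome b \<rho> = {}"
    using IH by blast
  have "l1 \<notin> C" using C(1) by auto
  then have "card (insert l1 C) = Suc Z" using C by auto
  moreover have "insert l1 C \<subseteq> Li" using C(1) step.hyps(1) by auto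
  moreover have "\<forall>a\<in>insert l1 C. \<forall>b\<in>insert l1 C. a \<noteq> b \<longrightarrow> hippodrome a \<rho> \<inter> hippodrome b \<rho> = {}"
    using C(1,4) by blast
  ultimately show ?case using fin card cov C(2) by (metis finite_insert)
qed

lemma fiber_card:
  assumes "finite F" "\<rho> > 0"
    and sb: "\<And>j c. (j, c) \<in> F \<Longrightarrow> SB \<rho> yb j c \<and> covers \<rho> p c"
    and dj: "\<And>j c c'. (j, c) \<in> F \<Longrightarrow> (j, c') \<in> F \<Longrightarrow> c \<noteq> c' \<Longrightarrow>
               hippodrome c \<rho> \<inter> hippodrome c' \<rho> = {}"
  shows "card F \<le> 3"
proof -
  have inj: "inj_on fst F"
  proof (rule inj_onI)
    fix a b assume ab: "a \<in> F" "b \<in> F" "fst a = fst b"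
    obtain j c where a: "a = (j, c)" by (cases a)
    obtain c' where b: "b = (j, c')" using ab(3) a by (metis fst_conv prod.collapse)
    show "a = b"
    proof (rule ccontr)
      assume "a \<noteq> b"
      then have "c \<noteq> c'" using a b by auto
      moreover have "p \<in> hippodrome c \<rho>" "p \<in> hippodrome c' \<rho>"
        using sb[of j c] sb[of j c'] ab a b by (auto simp: hippodrome_def covers_def)
      ultimately show False using dj[of j c c'] ab a b by auto
    qed
  qed
  have close: "j' \<le> j + 2" if jj: "j \<in> fst ` F" "j' \<in> fst ` F" for j j'
  proof -
    obtain c where c: "(j, c) \<in> F" using jj(1) by force
    obtain c' where c': "(j', c') \<in> F" using jj(2) by force
    have s1: "SB \<rho> yb j c" "covers \<rho> p c" using sb[OF c] by auto
    have s2: "SB \<rho> yb j' c'" "covers \<rho> p c'" using sb[OF c'] by auto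
    obtain x where x: "dist p (x, seg_y c) \<le> \<rho>"
      using covers_point[of p c \<rho>] s1 by (auto simp: covers_def SB_def)
    obtain x' where x': "dist p (x', seg_y c') \<le> \<rho>"
      using covers_point[of p c' \<rho>] s2 by (auto simp: covers_def SB_def)
    have "seg_y c' - seg_y c \<le> 2 * \<rho>"
      using x x' dist_comp(2)[where s=p and x=x and y="seg_y c"] dist_comp(2)[where s=p and x=x' and y="seg_y c'"] by linarith
    then have key: "(real j' - real j - 1) * (sqrt 3 * \<rho>) \<le> 2 * \<rho>"
      using s1(1) s2(1) unfolding SB_def by (simp add: algebra_simps)
    show ?thesis
    proof (rule ccontr)
      assume "\<not> j' \<le> j + 2"
      then have d: "real j' - real j - 1 \<ge> 2" by linarith
      have s3: "sqrt 3 > 1" by simp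
      have "2 * (sqrt 3 * \<rho>) \<le> (real j' - real j - 1) * (sqrt 3 * \<rho>)"
        by (rule mult_right_mono[OF d]) (use assms(2) in simp)
      moreover have "2 * \<rho> < 2 * (sqrt 3 * \<rho>)" using s3 assms(2) by simp
      ultimately show False using key by linarith
    qed
  qed
  have "card (fst ` F) \<le> 3"
  proof (cases "F = {}")
    case True then show ?thesis by simp
  next
    case False
    define m where "m = Min (fst ` F)"
    have m: "m \<in> fst ` F" using False assms(1) unfolding m_def by simp
    have "fst ` F \<subseteq> {m..m+2}"
    proof
      fix j assume j: "j \<in> fst ` F"
      have "m \<le> j" using j assms(1) unfolding m_def by simp
      then show "j \<in> {m..m+2}" using close[OF m j] by simp
    qed
    then have "card (fst ` F) \<le> card {m..m+2}" by (rule card_mono[rotated]) simp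
    then show ?thesis by simp
  qed
  then show ?thesis using card_image[OF inj] by simp
qed

lemma h_le:
  assumes "h > 0" "\<rho> > 0"
  shows "h \<le> real (num_strips h \<rho>) * (sqrt 3 * \<rho>)" "num_strips h \<rho> \<ge> 1"
proof -
  have sp: "sqrt 3 * \<rho> > 0" using assms by simp
  have q: "h / (sqrt 3 * \<rho>) > 0" using assms sp by simp
  have c: "real (num_strips h \<rho>) = of_int \<lceil>h / (sqrt 3 * \<rho>)\<rceil>"
    unfolding num_strips_def using q by (simp add: ceiling_le_zero not_le)
  have "h / (sqrt 3 * \<rho>) \<le> real (num_strips h \<rho>)" using c le_of_int_ceiling by simp
  then show "h \<le> real (num_strips h \<rho>) * (sqrt 3 * \<rho>)" using sp by (simp add: divide_le_eq)
  have "\<lceil>h / (sqrt 3 * \<rho>)\<rceil> \<ge> 1" using q by (simp add: one_le_ceiling)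
  then show "num_strips h \<rho> \<ge> 1" unfolding num_strips_def by (simp add: le_nat_iff)
qed

lemma strip_SB:
  assumes "h > 0" "\<rho> > 0" "l \<in> strip_segs L y0 h \<rho> j" "\<forall>l\<in>L. seg_in_rect x0 xm y0 h l"
  shows "SB \<rho> y0 j l"
proof -
  have l: "l \<in> L" "in_strip y0 h \<rho> j l" using assms(3) by (auto simp: strip_segs_def)
  have "seg_y l \<le> y0 + real j * (sqrt 3 * \<rho>)"
    using l(2) h_le(1)[OF assms(1,2)] unfolding in_strip_def by auto
  then show ?thesis using l assms(4) by (auto simp: SB_def in_strip_def seg_in_rect_def)
qed

lemma in_some_strip:
  assumes "h > 0" "\<rho> > 0" "seg_in_rect x0 xm y0 h l"
  shows "\<exists>j\<in>{1..num_strips h \<rho>}. in_strip y0 h \<rho> j l"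
proof -
  define s where "s = sqrt 3 * \<rho>"
  define t where "t = num_strips h \<rho>"
  define q where "q = (seg_y l - y0) / s"
  have sp: "s > 0" using assms unfolding s_def by simp
  have yl: "y0 \<le> seg_y l" "seg_y l \<le> y0 + h" using assms(3) by (auto simp: seg_in_rect_def)
  have ht: "h \<le> real t * s" "t \<ge> 1" using h_le[OF assms(1,2)] unfolding s_def t_def by auto
  have q0: "q \<ge> 0" using yl sp unfolding q_def by simp
  have yq: "seg_y l = y0 + q * s" using sp unfolding q_def by simp
  show ?thesis
  proof (cases "q < real t")
    case True
    define k where "k = \<lfloor>q\<rfloor>"
    have k0: "k \<ge> 0" using q0 unfolding k_def by simp
    have kq: "real_of_int k \<le> q" "q < real_of_int k + 1" unfolding k_def by linarith+
    have "k < int t" using kq True by linarith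
    define j where "j = nat k + 1"
    have jr: "real j = real_of_int k + 1" using k0 unfolding j_def by simp
    have "j \<in> {1..t}" using \<open>k < int t\<close> k0 unfolding j_def by auto
    moreover have "(real j - 1) * s \<le> q * s" using jr kq sp by (simp add: mult_right_mono)
    moreover have "q * s < real j * s" using jr kq sp by simp
    ultimately show ?thesis using yq unfolding in_strip_def s_def t_def by auto
  next
    case False
    have "q * s \<le> h" using yl yq by simp
    then have "real t * s \<le> q * s" using False sp by (simp add: mult_right_mono)
    then have eq: "seg_y l = y0 + h" using yl yq ht by linarith
    have "(real t - 1) * s \<le> q * s" using False sp by (simp add: mult_right_mono)
    then have a: "y0 + (real t - 1) * (sqrt 3 * \<rho>) \<le> seg_y l" using yq unfolding s_def by simp
    have "in_strip y0 h \<rho> t l" unfolding in_strip_def using a eq t_def by blast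
    moreover have "t \<in> {1..num_strips h \<rho>}" using ht(2) t_def by simp
    ultimately show ?thesis by blast
  qed
qed

theorem lemma3:
  fixes L :: "hseg set" and \<rho> x0 xm y0 h :: real
    and Q :: "nat \<Rightarrow> (real \<times> real) set" and Z :: "nat \<Rightarrow> nat"
  assumes "finite L" and "\<rho> > 0" and "h > 0" and "x0 \<le> xm"
    and "\<forall>l\<in>L. seg_in_rect x0 xm y0 h l"
    and "\<forall>j\<in>{1..num_strips h \<rho>}. strip_greedy \<rho> y0 j (strip_segs L y0 h \<rho> j) (Q j) (Z j)"
  shows "(\<forall>l\<in>L. \<exists>s\<in>(\<Union>j\<in>{1..num_strips h \<rho>}. Q j). covers \<rho> s l)
       \<and> card (\<Union>j\<in>{1..num_strips h \<rho>}. Q j) \<le> 6 * OPT \<rho> L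
       \<and> real (\<Sum>j=1..num_strips h \<rho>. Z j) / 3 \<le> real (OPT \<rho> L)"
proof -
  define t where "t = num_strips h \<rho>"
  have GP: "finite (Q j) \<and> card (Q j) \<le> 2 * Z j \<and>
      (\<forall>l\<in>strip_segs L y0 h \<rho> j. \<exists>q\<in>Q j. covers \<rho> q l) \<and>
      (\<exists>C\<subseteq>strip_segs L y0 h \<rho> j. finite C \<and> card C = Z j \<and>
       (\<forall>a\<in>C. \<forall>b\<in>C. a \<noteq> b \<longrightarrow> hippodrome a \<rho> \<inter> hippodrome b \<rho> = {}))"
    if "j \<in> {1..t}" for j
  proof -
    have sg: "strip_greedy \<rho> y0 j (strip_segs L y0 h \<rho> j) (Q j) (Z j)"
      using assms(6) that unfolding t_def by blast
    have sb: "\<forall>l\<in>strip_segs L y0 h \<rho> j. SB \<rho> y0 j l"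
      using strip_SB[OF assms(3,2) _ assms(5)] by blast
    show ?thesis by (rule greedy_props[OF sg assms(2) sb])
  qed
  have cov: "\<forall>l\<in>L. \<exists>s\<in>(\<Union>j\<in>{1..t}. Q j). covers \<rho> s l"
  proof
    fix l assume l: "l \<in> L"
    obtain j where j: "j \<in> {1..t}" "in_strip y0 h \<rho> j l"
      using in_some_strip[OF assms(3,2)] assms(5) l unfolding t_def by blast
    then have "l \<in> strip_segs L y0 h \<rho> j" using l by (simp add: strip_segs_def)
    then show "\<exists>s\<in>(\<Union>j\<in>{1..t}. Q j). covers \<rho> s l" using GP[OF j(1)] j(1) by blast
  qed
  have ex: "\<exists>P. finite P \<and> card P = card ((\<lambda>l. (seg_left l, seg_y l)) ` L) \<and> (\<forall>l\<in>L. \<exists>s\<in>P. covers \<rho> s l)"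
  proof (intro exI conjI)
    show "finite ((\<lambda>l. (seg_left l, seg_y l)) ` L)" using assms(1) by simp
    show "\<forall>l\<in>L. \<exists>s\<in>(\<lambda>l. (seg_left l, seg_y l)) ` L. covers \<rho> s l"
    proof
      fix l assume l: "l \<in> L"
      have "(seg_left l, seg_y l) \<in> seg_set l" using assms(5) l
        by (auto simp: seg_set_eq seg_in_rect_def)
      then have "covers \<rho> (seg_left l, seg_y l) l"
        unfolding covers_def using infdist_zero assms(2) by simp
      then show "\<exists>s\<in>(\<lambda>l. (seg_left l, seg_y l)) ` L. covers \<rho> s l" using l by blast
    qed
  qed simp
  obtain P where P: "finite P" "card P = OPT \<rho> L" "\<forall>l\<in>L. \<exists>s\<in>P. covers \<rho> s l"
  proof -
    have ex2: "\<exists>n. \<exists>P. finite P \<and> card P = n \<and> (\<forall>l\<in>L. \<exists>s\<in>P. covers \<rho> s l)"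
      using ex by blast
    show ?thesis using LeastI_ex[OF ex2] that unfolding OPT_def by blast
  qed
  obtain C where C: "\<forall>j\<in>{1..t}. C j \<subseteq> strip_segs L y0 h \<rho> j \<and> finite (C j) \<and> card (C j) = Z j \<and>
       (\<forall>a\<in>C j. \<forall>b\<in>C j. a \<noteq> b \<longrightarrow> hippodrome a \<rho> \<inter> hippodrome b \<rho> = {})"
    using bchoice[of "{1..t}" "\<lambda>j C. C \<subseteq> strip_segs L y0 h \<rho> j \<and> finite C \<and> card C = Z j \<and>
       (\<forall>a\<in>C. \<forall>b\<in>C. a \<noteq> b \<longrightarrow> hippodrome a \<rho> \<inter> hippodrome b \<rho> = {})"] GP by blast
  define A where "A = Sigma {1..t} C"
  have finA: "finite A" using C unfolding A_def by auto
  have cardA: "card A = (\<Sum>j=1..t. Z j)"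
    unfolding A_def using C by (simp add: card_SigmaI)
  define g where "g (a :: nat \<times> hseg) = (SOME p. p \<in> P \<and> covers \<rho> p (snd a))" for a
  have g: "g a \<in> P \<and> covers \<rho> (g a) (snd a)" if aA: "a \<in> A" for a
  proof -
    obtain j c where a: "a = (j, c)" "j \<in> {1..t}" "c \<in> C j" using aA unfolding A_def by auto
    have "c \<in> strip_segs L y0 h \<rho> j" using C a(2,3) by blast
    then have "snd a \<in> L" using a(1) by (simp add: strip_segs_def)
    then have "\<exists>p. p \<in> P \<and> covers \<rho> p (snd a)" using P(3) by blast
    then show ?thesis unfolding g_def by (rule someI_ex)
  qed
  have gi: "g ` A \<subseteq> P" using g by blast
  have "card A = (\<Sum>p\<in>P. card {a\<in>A. g a = p})"
    using sum.group[OF finA P(1) gi, of "\<lambda>_. 1::nat"] by simp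
  also have "\<dots> \<le> (\<Sum>p\<in>P. 3)"
  proof (rule sum_mono)
    fix p assume "p \<in> P"
    show "card {a\<in>A. g a = p} \<le> 3"
    proof (rule fiber_card[where \<rho>=\<rho> and yb=y0 and p=p])
      show "finite {a\<in>A. g a = p}" using finA by simp
      show "\<rho> > 0" by (rule assms(2))
      fix j c assume jc: "(j, c) \<in> {a\<in>A. g a = p}"
      then have "j \<in> {1..t}" "c \<in> C j" unfolding A_def by auto
      then have "c \<in> strip_segs L y0 h \<rho> j" using C by blast
      then have "SB \<rho> y0 j c" by (rule strip_SB[OF assms(3,2) _ assms(5)])
      moreover have "(j, c) \<in> A" "g (j, c) = p" using jc by simp_all
      ultimately show "SB \<rho> y0 j c \<and> covers \<rho> p c" using g[of "(j,c)"] by simp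
    next
      fix j c c' assume "(j, c) \<in> {a\<in>A. g a = p}" "(j, c') \<in> {a\<in>A. g a = p}" "c \<noteq> c'"
      then have "j \<in> {1..t}" "c \<in> C j" "c' \<in> C j" unfolding A_def by auto
      then show "hippodrome c \<rho> \<inter> hippodrome c' \<rho> = {}" using C \<open>c \<noteq> c'\<close> by blast
    qed
  qed
  finally have Zb: "(\<Sum>j=1..t. Z j) \<le> 3 * OPT \<rho> L" using cardA P(2) by simp
  have "card (\<Union>j\<in>{1..t}. Q j) \<le> (\<Sum>j=1..t. card (Q j))" by (rule card_UN_le) simp
  also have "\<dots> \<le> (\<Sum>j=1..t. 2 * Z j)" using GP by (intro sum_mono) auto
  also have "\<dots> = 2 * (\<Sum>j=1..t. Z j)" by (simp add: sum_distrib_left)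
  finally have "card (\<Union>j\<in>{1..t}. Q j) \<le> 6 * OPT \<rho> L" using Zb by linarith
  moreover have "real (\<Sum>j=1..t. Z j) / 3 \<le> real (OPT \<rho> L)" using Zb by linarith
  ultimately show ?thesis using cov unfolding t_def by blast
qed

end
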